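(* Let $r,\alpha,p$ be nonnegative integers such that $r+1$ and $p$ are both prime. Then $(r+1)^{\alpha}p\in G_r$ if and only if for every nonnegative integer $t\le\alpha$ we have both $p\neq (r+1)^t+r$ and $(r+1)^t p+r$ is not prime.
   Context: For a positive integer $r$, the $r$-th Schemmel totient function $S_r:\mathbb{N}\to\mathbb{N}_0$ is the multiplicative arithmetic function (so $S_r(1)=1$ and $S_r(ab)=S_r(a)S_r(b)$ for coprime $a,b$) defined on prime powers by $S_r(p^{\alpha})=0$ if $p\le r$ and $S_r(p^\alpha)=p^{\alpha-1}(p-r)$ if $p>r$, for all primes $p$ and positive integers $\alpha$. $G_r$ denotes the set of positive integers not in the range of $S_r$ (Schemmel nontotient numbers of order $r$). *)

theory Defs
  imports "HOL-Computational_Algebra.Primes"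
begin

text \<open>Schemmel totient: multiplicative, with S_r(p^a) = 0 if p <= r and p^(a-1)(p-r) if p > r.
  Defined via the prime factorization of n (S_r 1 = 1 as the empty product).\<close>
definition schemmel :: "nat \<Rightarrow> nat \<Rightarrow> nat" where
  "schemmel r n = (\<Prod>p\<in>prime_factors n.
      (if p \<le> r then 0 else p ^ (multiplicity p n - 1) * (p - r)))"

definition G :: "nat \<Rightarrow> nat set" where
  "G r = {m. m > 0 \<and> \<not> (\<exists>n>0. schemmel r n = m)}"

end

theory Submission
  imports Defs
begin

lemma schemmel_pp:
  assumes "prime s" "k > 0"
  shows "schemmel r (s ^ k) = (if s \<le> r then 0 else s ^ (k - 1) * (s - r))"
proof -
  have "prime_factors (s ^ k) = {s}"
    using assms by (simp add: prime_factorization_prime_power)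
  moreover have "multiplicity s (s ^ k) = k"
    using assms by (simp add: prime_imp_prime_elem)
  ultimately show ?thesis unfolding schemmel_def by simp
qed

lemma schemmel_mult:
  assumes "coprime a b" "a > 0" "b > 0"
  shows "schemmel r (a * b) = schemmel r a * schemmel r b"
proof -
  let ?f = "\<lambda>n p. (if p \<le> r then 0 else p ^ (multiplicity p n - 1) * (p - r))"
  have U: "prime_factors (a * b) = prime_factors a \<union> prime_factors b"
    using assms by (simp add: prime_factors_product)
  have D: "prime_factors a \<inter> prime_factors b = {}"
  proof (rule ccontr)
    assume "prime_factors a \<inter> prime_factors b \<noteq> {}"
    then obtain p where "p \<in> prime_factors a" "p \<in> prime_factors b" by blast
    then have "prime p" "p dvd a" "p dvd b" by auto
    then show False using assms(1)
      by (metis coprime_common_divisor_nat not_prime_1)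
  qed
  have "schemmel r (a * b) = (\<Prod>p\<in>prime_factors a. ?f (a*b) p) * (\<Prod>p\<in>prime_factors b. ?f (a*b) p)"
    unfolding schemmel_def U by (rule prod.union_disjoint) (auto simp: D)
  also have "(\<Prod>p\<in>prime_factors a. ?f (a*b) p) = (\<Prod>p\<in>prime_factors a. ?f a p)"
  proof (rule prod.cong)
    fix p assume p: "p \<in> prime_factors a"
    then have "p \<notin> prime_factors b" using D by blast
    then have "\<not> p dvd b" using p assms by (auto simp: in_prime_factors_iff)
    moreover have "prime p" using p by auto
    moreover have "multiplicity p (a * b) = multiplicity p a + multiplicity p b"
      by (rule prime_elem_multiplicity_mult_distrib) (use assms \<open>prime p\<close> prime_imp_prime_elem in auto)
    ultimately have "multiplicity p (a * b) = multiplicity p a"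
      using not_dvd_imp_multiplicity_0 by simp
    then show "?f (a*b) p = ?f a p" by simp
  qed simp
  also have "(\<Prod>p\<in>prime_factors b. ?f (a*b) p) = (\<Prod>p\<in>prime_factors b. ?f b p)"
  proof (rule prod.cong)
    fix p assume p: "p \<in> prime_factors b"
    then have "p \<notin> prime_factors a" using D by blast
    then have "\<not> p dvd a" using p assms by (auto simp: in_prime_factors_iff)
    moreover have "prime p" using p by auto
    moreover have "multiplicity p (a * b) = multiplicity p a + multiplicity p b"
      by (rule prime_elem_multiplicity_mult_distrib) (use assms \<open>prime p\<close> prime_imp_prime_elem in auto)
    ultimately have "multiplicity p (a * b) = multiplicity p b"
      using not_dvd_imp_multiplicity_0 by simp
    then show "?f (a*b) p = ?f b p" by simp
  qed simp
  finally show ?thesis unfolding schemmel_def .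
qed

lemma coprime_pp:
  fixes s q :: nat
  assumes "prime s" "prime q" "s \<noteq> q"
  shows "coprime (s ^ i) (q ^ j)"
  using assms by (simp add: primes_coprime)

lemma construct:
  fixes r \<alpha> p :: nat
  assumes q: "prime (r + 1)" and pp: "prime p"
    and ex: "\<exists>t \<le> \<alpha>. p = (r + 1) ^ t + r \<or> prime ((r + 1) ^ t * p + r)"
  shows "\<exists>n>0. schemmel r n = (r + 1) ^ \<alpha> * p"
proof -
  define q where "q = r + 1"
  have qp: "prime q" using q q_def by simp
  have Sq: "schemmel r (q ^ k) = q ^ (k - 1)" if "k > 0" for k
    using schemmel_pp[OF qp that] q_def by simp
  from ex obtain t where t: "t \<le> \<alpha>" and h: "p = q ^ t + r \<or> prime (q ^ t * p + r)"
    unfolding q_def by blast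
  show ?thesis
  proof (cases "p = q")
    case True
    have "schemmel r (q ^ (\<alpha> + 2)) = q ^ \<alpha> * p" using Sq[of "\<alpha>+2"] True by simp
    then show ?thesis using qp q_def by (metis prime_gt_0_nat zero_less_power)
  next
    case False
    note pq = False
    have qpos: "q > 0" using qp prime_gt_0_nat by blast
    show ?thesis
    proof (cases "p = q ^ t + r")
      case True
      have pr: "\<not> p \<le> r" using True qpos by simp
      have "schemmel r (p ^ 2 * q ^ (\<alpha> - t + 1)) = schemmel r (p^2) * schemmel r (q ^ (\<alpha> - t + 1))"
        by (rule schemmel_mult) (use coprime_pp[OF pp qp pq] pp qp prime_gt_0_nat in auto)
      also have "\<dots> = p * q ^ t * q ^ (\<alpha> - t)"
        using schemmel_pp[OF pp, of 2 r] pr Sq[of "\<alpha> - t + 1"] True by simp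
      also have "\<dots> = q ^ \<alpha> * p" using t
        by (metis (no_types, lifting) le_add_diff_inverse mult.commute mult.left_commute power_add)
      finally show ?thesis using pp qp prime_gt_0_nat unfolding q_def
        by (metis nat_0_less_mult_iff zero_less_power)
    next
      case False
      with h have sp: "prime (q ^ t * p + r)" by simp
      define s where "s = q ^ t * p + r"
      have "p \<ge> 2" using pp prime_ge_2_nat by blast
      moreover have "q ^ t \<ge> 1" using qpos by simp
      ultimately have "q ^ t * p \<ge> 2" by (metis le_trans mult_le_mono one_le_numeral mult_1)
      then have sq: "s \<noteq> q" and sr: "\<not> s \<le> r" unfolding s_def q_def by linarith+
      have "schemmel r (s * q ^ (\<alpha> - t + 1)) = schemmel r s * schemmel r (q ^ (\<alpha> - t + 1))"
        by (rule schemmel_mult) (use coprime_pp[OF sp[folded s_def] qp sq, of 1] prime_gt_0_nat[OF sp[folded s_def]] qpos in auto)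
      also have "\<dots> = q ^ t * p * q ^ (\<alpha> - t)"
        using schemmel_pp[OF sp[folded s_def], of 1 r] sr Sq[of "\<alpha> - t + 1"] s_def by simp
      also have "\<dots> = q ^ \<alpha> * p" using t
        by (metis (no_types, lifting) le_add_diff_inverse mult.commute mult.left_commute power_add)
      finally show ?thesis using sp qp prime_gt_0_nat unfolding q_def s_def
        by (metis nat_0_less_mult_iff zero_less_power)
    qed
  qed
qed

lemma extract_t:
  fixes r \<alpha> p n :: nat
  assumes qp: "prime (r + 1)" and pp: "prime p" and n: "n > 0"
    and S: "schemmel r n = (r + 1) ^ \<alpha> * p"
  shows "\<exists>t \<le> \<alpha>. p = (r + 1) ^ t + r \<or> prime ((r + 1) ^ t * p + r)"
proof (cases "p = r + 1")
  case True
  then show ?thesis by auto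
next
  case False
  define q where "q = r + 1"
  have qpos: "q > 0" using qp q_def by (simp add: prime_gt_0_nat)
  have ppos: "p > 0" using pp by (simp add: prime_gt_0_nat)
  define f where "f = (\<lambda>s. if s \<le> r then 0 else s ^ (multiplicity s n - 1) * (s - r))"
  have P: "prod f (prime_factors n) = q ^ \<alpha> * p"
    using S unfolding schemmel_def f_def q_def by simp
  have "p dvd prod f (prime_factors n)" using P by simp
  then have "\<exists>s\<in>prime_factors n. p dvd f s"
    by (rule iffD1[OF prime_dvd_prod_iff[OF finite_set_mset pp]])
  then obtain s where s: "s \<in> prime_factors n" and ps: "p dvd f s" by blast
  have "f s dvd prod f (prime_factors n)" by (rule dvd_prodI[OF finite_set_mset s])
  then have fd: "f s dvd q ^ \<alpha> * p" by (simp only: P)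
  have "q ^ \<alpha> * p \<noteq> 0" using qpos ppos by simp
  then have "f s \<noteq> 0" using fd by (metis dvd_0_left)
  then have sr: "\<not> s \<le> r" unfolding f_def by auto
  define k where "k = multiplicity s n"
  have fs: "f s = s ^ (k - 1) * (s - r)" using sr unfolding f_def k_def by simp
  have sp: "prime s" using s by (simp add: in_prime_factors_iff)
  have cancel: "X dvd q ^ \<alpha>" if "p * X dvd q ^ \<alpha> * p" for X
  proof -
    have "p * X dvd p * q ^ \<alpha>" using that by (simp only: mult.commute[of "q ^ \<alpha>" p])
    then show ?thesis using ppos by simp
  qed
  have qpr: "prime q" using qp q_def by simp
  show ?thesis
  proof (cases "p dvd s ^ (k - 1)")
    case True
    then have "p dvd s" by (rule prime_dvd_power[OF pp])
    then have ps_eq: "p = s" by (rule primes_dvd_imp_eq[OF pp sp])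
    have "k - 1 \<noteq> 0"
    proof
      assume "k - 1 = 0"
      then have "p dvd 1" using True by simp
      then show False using pp by simp
    qed
    then obtain j where j: "k - 1 = Suc j" using not0_implies_Suc by blast
    have "f s = p * (p ^ j * (p - r))" using fs ps_eq j by (simp add: ac_simps)
    then have "p * (p ^ j * (p - r)) dvd q ^ \<alpha> * p" using fd by simp
    then have "p ^ j * (p - r) dvd q ^ \<alpha>" by (rule cancel)
    then have "p - r dvd q ^ \<alpha>" using dvd_mult_right by blast
    then obtain i where i: "i \<le> \<alpha>" "p - r = q ^ i" using divides_primepow_nat[OF qpr] by blast
    then have "p = q ^ i + r" using sr ps_eq by simp
    then show ?thesis using i q_def by blast
  next
    case False
    have "p dvd s ^ (k - 1) * (s - r)" using ps fs by simp
    then have "p dvd s - r" using False by (simp add: prime_dvd_mult_iff[OF pp])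
    then obtain c where c: "s - r = p * c" by (rule dvdE)
    have "f s = p * (s ^ (k - 1) * c)" using fs c by (simp add: ac_simps)
    then have "p * (s ^ (k - 1) * c) dvd q ^ \<alpha> * p" using fd by simp
    then have "s ^ (k - 1) * c dvd q ^ \<alpha>" by (rule cancel)
    then have "c dvd q ^ \<alpha>" by (rule dvd_mult_right)
    then obtain i where i: "i \<le> \<alpha>" "c = q ^ i" using divides_primepow_nat[OF qpr] by blast
    then have "s - r = q ^ i * p" using c by simp
    then have "s = q ^ i * p + r" using sr by linarith
    then have "prime ((r + 1) ^ i * p + r)" using sp q_def by simp
    then show ?thesis using i(1) by blast
  qed
qed

theorem lemma2p2:
  fixes r \<alpha> p :: nat
  assumes "prime (r + 1)" and "prime p"
  shows "(r + 1) ^ \<alpha> * p \<in> G r \<longleftrightarrow>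
    (\<forall>t \<le> \<alpha>. p \<noteq> (r + 1) ^ t + r \<and> \<not> prime ((r + 1) ^ t * p + r))"
proof -
  have pos: "(r + 1) ^ \<alpha> * p > 0" using assms(2) by (simp add: prime_gt_0_nat)
  show ?thesis
  proof
    assume "(r + 1) ^ \<alpha> * p \<in> G r"
    then have ne: "\<not> (\<exists>n>0. schemmel r n = (r + 1) ^ \<alpha> * p)" unfolding G_def by simp
    show "\<forall>t \<le> \<alpha>. p \<noteq> (r + 1) ^ t + r \<and> \<not> prime ((r + 1) ^ t * p + r)"
    proof (rule ccontr)
      assume "\<not> (\<forall>t \<le> \<alpha>. p \<noteq> (r + 1) ^ t + r \<and> \<not> prime ((r + 1) ^ t * p + r))"
      then have "\<exists>t \<le> \<alpha>. p = (r + 1) ^ t + r \<or> prime ((r + 1) ^ t * p + r)" by blast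
      then show False using construct[OF assms] ne by blast
    qed
  next
    assume H: "\<forall>t \<le> \<alpha>. p \<noteq> (r + 1) ^ t + r \<and> \<not> prime ((r + 1) ^ t * p + r)"
    have "\<not> (\<exists>n>0. schemmel r n = (r + 1) ^ \<alpha> * p)"
    proof
      assume "\<exists>n>0. schemmel r n = (r + 1) ^ \<alpha> * p"
      then obtain n where "n > 0" "schemmel r n = (r + 1) ^ \<alpha> * p" by blast
      from extract_t[OF assms this] H show False by blast
    qed
    then show "(r + 1) ^ \<alpha> * p \<in> G r" unfolding G_def using pos by simp
  qed
qed

end
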